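(* $\Delta_u$ is a simple closed curve, and the area of the region it bounds equals $\dfrac{\pi c^4}{2ab}=\dfrac{\pi(a^2-b^2)^2}{2ab}$; in particular it is independent of $u$.
   Context: Let $a>b>0$ and $c>0$ with $c^2=a^2-b^2$. Let $\mathcal{E}$ be the ellipse $x^2/a^2+y^2/b^2=1$ with center $O=(0,0)$, parametrized by $P(t)=(a\cos t,b\sin t)$. Fix $u\in\mathbb{R}$ and let $M=M_u=(a\cos u,b\sin u)\in\mathcal{E}$. Let $\Delta_u(t)=(x_u(t),y_u(t))$, $t\in\mathbb{R}$, where $x_u(t)=\frac1a\big(c^2(1+\cos(t+u))\cos t-a^2\cos u\big)$ and $y_u(t)=\frac1b\big(c^2\cos t\sin(t+u)-c^2\sin t-a^2\sin u\big)$; this is the negative pedal curve of $\mathcal{E}$ with respect to $M$, i.e. the envelope of the lines through $P(t)$ perpendicular to $P(t)-M$. *)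

theory Defs
  imports "HOL-Analysis.Analysis"
begin

text \<open>The negative pedal curve Delta_u of the ellipse x^2/a^2+y^2/b^2=1 with respect to
  M_u = (a cos u, b sin u), with c^2 = a^2 - b^2, as a map R -> C (plane identified with C).\<close>
definition neg_pedal :: "real \<Rightarrow> real \<Rightarrow> real \<Rightarrow> real \<Rightarrow> real \<Rightarrow> complex" where
  "neg_pedal a b c u t =
     Complex ((c^2 * (1 + cos (t + u)) * cos t - a^2 * cos u) / a)
             ((c^2 * cos t * sin (t + u) - c^2 * sin t - a^2 * sin u) / b)"

definition neg_pedal_path :: "real \<Rightarrow> real \<Rightarrow> real \<Rightarrow> real \<Rightarrow> real \<Rightarrow> complex" where
  "neg_pedal_path a b c u s = neg_pedal a b c u (2 * pi * s)"

end

theory Submission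
  imports Defs "HOL-Complex_Analysis.Complex_Analysis"
begin


definition Gc :: "real \<Rightarrow> real \<Rightarrow> real \<Rightarrow> real \<Rightarrow> complex \<Rightarrow> complex" where
 "Gc a b c u z = Complex ((c^2 * Re z + c^2/2 * (cos u * ((Re z)^2 - (Im z)^2) + 2 * sin u * Re z * Im z) + (c^2/2 - a^2) * cos u)/a)
   ((c^2 * Im z + c^2/2 * (sin u * ((Re z)^2 - (Im z)^2) - 2 * cos u * Re z * Im z) + (c^2/2-a^2) * sin u)/b)"

definition Aff :: "real \<Rightarrow> real \<Rightarrow> complex \<Rightarrow> complex" where
 "Aff a b w = Complex (Re w / a) (Im w / b)"

lemma Gc_alt: "Gc a b c u z = Aff a b (of_real (c^2) * z + of_real (c^2/2) * cis u * (cnj z)^2 + of_real (c^2/2 - a^2) * cis u)"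
proof -
  obtain x y where z: "z = Complex x y" by (meson complex.exhaust_sel)
  show ?thesis unfolding Gc_def Aff_def z
    by (simp add: power2_eq_square cis.code Complex_eq field_simps)
qed

lemma ringid: fixes z w :: complex shows "of_real (c^2) * (z - w) + (of_real (c^2/2) * cis u * (cnj z - cnj w) * (cnj z + cnj w))
      = (of_real (c^2) * z + of_real (c^2/2) * cis u * (cnj z)^2) - (of_real (c^2) * w + of_real (c^2/2) * cis u * (cnj w)^2)"
  by (simp add: power2_eq_square field_simps)

lemma t2: "reversepath (circlepath 0 1) s = cis (- (2 * pi * s))"
    by (simp add: reversepath_def circlepath cis_conv_exp exp_diff exp_minus divide_inverse algebra_simps)

lemma t3: fixes n m c :: real assumes "c > 0" "n > 0" "c^2 * n = c^2/2 * n * m" shows "m = 2"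
proof -
  have "c^2 * n * (2 - m) = 0" using assms(3) by (simp add: algebra_simps)
  thus ?thesis using assms(1,2) by simp
qed

lemma Aff_inj: "a \<noteq> 0 \<Longrightarrow> b \<noteq> 0 \<Longrightarrow> Aff a b w = Aff a b w' \<Longrightarrow> w = w'"
  by (simp add: Aff_def complex_eq_iff)

lemma g_inj:
  fixes z w :: complex
  assumes "c > 0" "norm z \<le> 1" "norm w \<le> 1"
    and eq: "of_real (c^2) * z + of_real (c^2/2) * cis u * (cnj z)^2 = of_real (c^2) * w + of_real (c^2/2) * cis u * (cnj w)^2"
  shows "z = w"
proof (rule ccontr)
  assume ne: "z \<noteq> w"
  have "of_real (c^2) * (z - w) = - (of_real (c^2/2) * cis u * (cnj z - cnj w) * (cnj z + cnj w))"
    using ringid[of c z w u] eq by (simp add: eq_neg_iff_add_eq_0)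
  hence nn: "norm (of_real (c^2) * (z - w)) = norm (of_real (c^2/2) * cis u * (cnj z - cnj w) * (cnj z + cnj w))"
    by (metis norm_minus_cancel)
  have cz: "c^2 * norm (z - w) = c^2/2 * norm (z - w) * norm (z + w)"
  proof -
    have e1: "cnj z - cnj w = cnj (z - w)" "cnj z + cnj w = cnj (z + w)" by simp_all
    show ?thesis using nn unfolding e1 norm_mult complex_mod_cnj by simp
  qed
  have pz: "norm (z-w) > 0" using ne by simp
  have "norm (z + w) = 2" using t3[OF assms(1) pz cz] .
  hence "norm (z + w)^2 = 4" by simp
  moreover have "norm (z+w)^2 + norm (z-w)^2 = 2 * norm z ^2 + 2 * norm w^2"
    by (simp add: power2_norm_eq_inner inner_add_left inner_add_right inner_diff_left inner_diff_right inner_commute)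
  moreover have "norm z ^2 \<le> 1" "norm w^2 \<le> 1" using assms by (simp_all add: power_le_one)
  ultimately have "norm (z-w)^2 \<le> 0" by linarith
  thus False using \<open>norm (z-w) > 0\<close> by simp
qed

lemma Gc_inj:
  assumes "a > 0" "b > 0" "c > 0"
  shows "inj_on (Gc a b c u) (cball 0 1)"
proof (rule inj_onI)
  fix z w assume z: "z \<in> cball 0 1" and w: "w \<in> cball 0 1" and e: "Gc a b c u z = Gc a b c u w"
  have "of_real (c^2) * z + of_real (c^2/2) * cis u * (cnj z)^2 + of_real (c^2/2 - a^2) * cis u =
         of_real (c^2) * w + of_real (c^2/2) * cis u * (cnj w)^2 + of_real (c^2/2 - a^2) * cis u"
    apply (rule Aff_inj[of a b])
    using assms e unfolding Gc_alt by auto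
  thus "z = w" using g_inj[OF assms(3), of z w u] z w by simp
qed

lemma Gc_cont: "a \<noteq> 0 \<Longrightarrow> b \<noteq> 0 \<Longrightarrow> continuous_on S (Gc a b c u)"
  unfolding Gc_def
  by (intro continuous_on_Complex continuous_on_divide continuous_on_add continuous_on_mult continuous_on_diff continuous_on_const continuous_on_Re continuous_on_Im continuous_on_power) auto

lemma re_id: fixes ct st cu su c a :: real
  shows "c^2 * (1 + (ct * cu - st * su)) * ct - a^2 * cu - (c^2 * ct + c^2/2 * (cu * (ct^2 - (- st)^2) + 2 * su * ct * (- st)) + (c^2/2 - a^2) * cu)
     = (c^2/2*cu) * (st^2 + ct^2 - 1)"
  by (simp add: algebra_simps power2_eq_square)

lemma im_id: fixes ct st cu su c a :: real
  shows "c^2 * ct * (st * cu + ct * su) - c^2 * st - a^2 * su - (c^2 * (- st) + c^2/2 * (su * (ct^2 - (- st)^2) - 2 * cu * ct * (- st)) + (c^2/2-a^2) * su)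
     = (c^2/2* su) * (st^2 + ct^2 - 1)"
  by (simp add: algebra_simps power2_eq_square)

lemma np_eq: "neg_pedal a b c u t = Gc a b c u (cis (- t))"
proof -
  have eR: "c^2 * (1 + (cos t * cos u - sin t * sin u)) * cos t - a^2 * cos u = (c^2 * cos t + c^2/2 * (cos u * ((cos t)^2 - (- sin t)^2) + 2 * sin u * cos t * (- sin t)) + (c^2/2 - a^2) * cos u)"
    using re_id[of c "cos t" "cos u" "sin t" "sin u" a] by (simp only: sin_cos_squared_add diff_self mult_zero_right right_minus_eq)
  have eI: "c^2 * cos t * (sin t * cos u + cos t * sin u) - c^2 * sin t - a^2 * sin u = (c^2 * (- sin t) + c^2/2 * (sin u * ((cos t)^2 - (- sin t)^2) - 2 * cos u * cos t * (- sin t)) + (c^2/2-a^2) * sin u)"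
    using im_id[of c "cos t" "sin t" "cos u" "sin u" a] by (simp only: sin_cos_squared_add diff_self mult_zero_right right_minus_eq)
  have r1: "Re (cis (-t)) = cos t" "Im (cis (-t)) = - sin t" by simp_all
  show ?thesis
    unfolding Gc_def neg_pedal_def r1 cos_add sin_add eR eI ..
qed

lemma path_comp: "neg_pedal_path a b c u = Gc a b c u \<circ> reversepath (circlepath 0 1)"
  by (rule ext) (simp add: neg_pedal_path_def np_eq t2)

lemma gamma_simple: "simple_path (reversepath (circlepath 0 1))"
  by (rule simple_path_reversepath) (simp add: circlepath_def simple_path_part_circlepath)

lemma gamma_image: "path_image (reversepath (circlepath 0 1)) = sphere 0 1"
  by (simp add: path_image_reversepath)

lemma conn_fill:
  fixes T U K P :: "complex set"
  assumes "connected T" "T \<inter> P = {}" "U \<subseteq> T" "open U" "U \<noteq> {}" "closed K" "K = U \<union> P"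
  shows "T = U"
proof -
  have "T \<subseteq> U \<union> (- K)" using assms by auto
  moreover have "U \<inter> (- K) \<inter> T = {}" using assms by auto
  ultimately have "U \<inter> T = {} \<or> (- K) \<inter> T = {}"
    using connectedD[OF assms(1) assms(4), of "- K"] assms(6) by blast
  hence "(- K) \<inter> T = {}" using assms by auto
  thus ?thesis using assms by auto
qed

lemma main_top:
  assumes "a > 0" "b > 0" "c > 0"
  shows "simple_path (neg_pedal_path a b c u)
       \<and> pathfinish (neg_pedal_path a b c u) = pathstart (neg_pedal_path a b c u)
       \<and> inside (path_image (neg_pedal_path a b c u)) = Gc a b c u ` ball 0 1"
proof -
  let ?G = "Gc a b c u" and ?p = "neg_pedal_path a b c u" and ?g = "reversepath (circlepath 0 1)"
  have cont: "continuous_on S ?G" for S using Gc_cont assms by auto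
  have inj: "inj_on ?G (cball 0 1)" using Gc_inj assms by auto
  have sp: "simple_path ?p" unfolding path_comp
    by (rule simple_path_continuous_image[OF gamma_simple]) (auto simp: gamma_image cont intro: inj_on_subset[OF inj])
  have cl: "pathfinish ?p = pathstart ?p" unfolding path_comp
    by (simp add: pathstart_compose pathfinish_compose)
  have pim: "path_image ?p = ?G ` sphere 0 1" unfolding path_comp
    by (simp add: path_image_compose gamma_image)
  note J = Jordan_inside_outside[OF sp cl]
  let ?U = "?G ` ball 0 1" and ?K = "?G ` cball 0 1" and ?P = "path_image ?p"
  have openU: "open ?U"
    by (rule invariance_of_domain) (auto intro: cont inj_on_subset[OF inj])
  have connU: "connected ?U" by (intro connected_continuous_image cont connected_ball)
  have neU: "?U \<noteq> {}" by simp
  have closK: "closed ?K" by (intro compact_imp_closed compact_continuous_image cont compact_cball)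
  have bK: "bounded ?K" by (intro compact_imp_bounded compact_continuous_image cont compact_cball)
  have KUP: "?K = ?U \<union> ?P" unfolding pim by (auto simp: image_Un[symmetric] cball_def ball_def sphere_def)
  have disj: "?U \<inter> ?P = {}"
  proof -
    { fix x y :: complex assume "x \<in> ball 0 1" "y \<in> sphere 0 1" "?G x = ?G y"
      hence False using inj_onD[OF inj, of x y] by auto }
    thus ?thesis unfolding pim by blast
  qed
  have sub: "?U \<subseteq> inside ?P \<union> outside ?P" using J disj by auto
  have "inside ?P \<inter> ?U = {} \<or> outside ?P \<inter> ?U = {}"
    using connectedD[OF connU, of "inside ?P" "outside ?P"] J sub by auto
  moreover
  { assume "inside ?P \<inter> ?U = {}"
    hence "?U \<subseteq> outside ?P" using sub by blast
    hence "outside ?P = ?U"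
      by (intro conn_fill[OF _ _ _ openU neU closK KUP]) (use J outside_no_overlap in auto)
    moreover have "?U \<subseteq> ?K" by (intro image_mono ball_subset_cball)
    ultimately have False using J bounded_subset[OF bK] by metis }
  moreover
  { assume "outside ?P \<inter> ?U = {}"
    hence "?U \<subseteq> inside ?P" using sub by blast
    hence "inside ?P = ?U"
      by (intro conn_fill[OF _ _ _ openU neU closK KUP]) (use J inside_no_overlap in auto) }
  ultimately have "inside ?P = ?U" by blast
  thus ?thesis using sp cl by simp
qed



definition E :: "real^2 \<Rightarrow> complex" where "E v = Complex (v$1) (v$2)"
definition Ei :: "complex \<Rightarrow> real^2" where "Ei w = Re w *\<^sub>R axis 1 1 + Im w *\<^sub>R axis 2 1"

lemma ax12[simp]: "(axis 1 (1::real) :: real^2) $ 2 = 0" "(axis 2 (1::real) :: real^2) $ 1 = 0"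
  by (simp_all add: axis_def)

lemma E_Ei[simp]: "E (Ei w) = w" by (simp add: E_def Ei_def)
lemma Ei_E[simp]: "Ei (E v) = v"
  by (simp add: E_def Ei_def vec_eq_iff forall_2)

lemma norm_E: "norm (E v) = norm v"
  by (simp add: E_def norm_vec_def L2_set_def UNIV_2 complex_norm)

lemma norm2_vec: "norm (v::real^2) ^ 2 = (v$1)^2 + (v$2)^2"
  by (simp add: norm_vec_def L2_set_def UNIV_2)

lemma nth_derivative[derivative_intros]: "((\<lambda>v::real^'n. v $ i) has_derivative (\<lambda>h. h $ i)) F"
  by (rule bounded_linear_imp_has_derivative) (rule bounded_linear_vec_nth)

lemma E_cont: "continuous_on S E"
  unfolding E_def by (intro continuous_on_Complex bounded_linear.continuous_on[OF bounded_linear_vec_nth] continuous_on_id)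

lemma E_meas: "E \<in> borel_measurable borel"
  by (rule borel_measurable_continuous_onI) (rule E_cont)

lemma E_meas': "E \<in> lborel \<rightarrow>\<^sub>M borel"
  using E_meas by (simp add: measurable_lborel1)

lemma Ebox: "E -` box l u = box (Ei l) (Ei u)"
  by (auto simp: mem_box_cart mem_box Basis_complex_def E_def Ei_def forall_2)

lemma lborel_E: "(lborel :: complex measure) = distr lborel borel E"
proof (rule lborel_eqI)
  fix l u :: complex assume le: "\<And>b. b \<in> Basis \<Longrightarrow> l \<bullet> b \<le> u \<bullet> b"
  have le1: "Re l \<le> Re u" "Im l \<le> Im u" using le[of 1] le[of \<i>] by (auto simp: Basis_complex_def)
  have "Ei l \<in> cbox (Ei l) (Ei u)" using le1 by (auto simp: mem_box_cart Ei_def forall_2)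
  hence ne: "cbox (Ei l) (Ei u) \<noteq> {}" by blast
  have "emeasure (distr lborel borel E) (box l u) = emeasure lborel (E -` box l u \<inter> space lborel)"
    by (rule emeasure_distr[OF E_meas']) simp
  also have "\<dots> = emeasure lborel (box (Ei l) (Ei u))" by (simp add: Ebox)
  also have "\<dots> = emeasure lborel (cbox (Ei l) (Ei u))" by (simp add: emeasure_lborel_box_eq emeasure_lborel_cbox_eq)
  also have "\<dots> = ennreal (measure lborel (cbox (Ei l) (Ei u)))"
    by (simp add: emeasure_lborel_cbox_eq measure_lborel_cbox_eq)
  also have "\<dots> = ennreal ((Re u - Re l) * (Im u - Im l))"
    unfolding content_cbox_cart[OF ne] by (simp add: UNIV_2 Ei_def)
  also have "\<dots> = (\<Prod>b\<in>Basis. (u - l) \<bullet> b)"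
    by (simp add: Basis_complex_def)
  finally show "emeasure (distr lborel borel E) (box l u) = (\<Prod>b\<in>Basis. (u - l) \<bullet> b)" .
qed simp


lemma meas_E: assumes "S \<in> sets borel" shows "measure lebesgue S = measure lebesgue (E -` S)"
proof -
  have "measure lebesgue S = measure lborel S" using assms by simp
  also have "\<dots> = measure (distr lborel borel E) S" by (simp only: lborel_E[symmetric])
  also have "\<dots> = measure lborel (E -` S \<inter> space lborel)" by (rule measure_distr[OF E_meas']) (use assms in simp)
  also have "\<dots> = measure lebesgue (E -` S)"
  proof -
    have "E -` S \<in> sets borel" using measurable_sets[OF E_meas assms] by simp
    thus ?thesis by simp
  qed
  finally show ?thesis .
qed

definition Px where "Px a b c u x y = (c^2 * x + c^2/2 * (cos u * (x^2 - y^2) + 2 * sin u * x * y) + (c^2/2 - a^2) * cos u)/a"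
definition Py where "Py a b c u x y = (c^2 * y + c^2/2 * (sin u * (x^2 - y^2) - 2 * cos u * x * y) + (c^2/2-a^2) * sin u)/b"

definition F :: "real \<Rightarrow> real \<Rightarrow> real \<Rightarrow> real \<Rightarrow> real^2 \<Rightarrow> real^2" where
  "F a b c u v = Px a b c u (v$1) (v$2) *\<^sub>R axis 1 1 + Py a b c u (v$1) (v$2) *\<^sub>R axis 2 1"

definition F' :: "real \<Rightarrow> real \<Rightarrow> real \<Rightarrow> real \<Rightarrow> real^2 \<Rightarrow> real^2 \<Rightarrow> real^2" where
  "F' a b c u v h = ((c^2 + c^2 * (cos u * v$1 + sin u * v$2))/a * h$1 + (c^2 * (sin u * v$1 - cos u * v$2))/a * h$2) *\<^sub>R axis 1 1
     + ((c^2 * (sin u * v$1 - cos u * v$2))/b * h$1 + (c^2 - c^2 * (sin u * v$2 + cos u * v$1))/b * h$2) *\<^sub>R axis 2 1"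

lemma Gc_P: "Gc a b c u z = Complex (Px a b c u (Re z) (Im z)) (Py a b c u (Re z) (Im z))"
  by (simp add: Gc_def Px_def Py_def)

lemma EF: "E (F a b c u v) = Gc a b c u (E v)"
  by (simp add: E_def F_def Gc_P)

lemma dPx: assumes "a \<noteq> 0" shows "((\<lambda>v::real^2. Px a b c u (v$1) (v$2)) has_derivative
   (\<lambda>h. (c^2 + c^2 * (cos u * v$1 + sin u * v$2))/a * h$1 + (c^2 * (sin u * v$1 - cos u * v$2))/a * h$2)) (at v within S)"
  unfolding Px_def using assms
  by (auto intro!: derivative_eq_intros simp: fun_eq_iff field_simps power2_eq_square)

lemma dPy: assumes "b \<noteq> 0" shows "((\<lambda>v::real^2. Py a b c u (v$1) (v$2)) has_derivative
   (\<lambda>h. (c^2 * (sin u * v$1 - cos u * v$2))/b * h$1 + (c^2 - c^2 * (sin u * v$2 + cos u * v$1))/b * h$2)) (at v within S)"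
  unfolding Py_def using assms
  by (auto intro!: derivative_eq_intros simp: fun_eq_iff field_simps power2_eq_square)

lemma dF: assumes "a \<noteq> 0" "b \<noteq> 0" shows "(F a b c u has_derivative F' a b c u v) (at v within S)"
  unfolding F_def F'_def
  by (intro has_derivative_add has_derivative_scaleR_left dPx dPy assms)

lemma detF_id: fixes x y cu su c :: real shows
  "(c^2 + c^2 * (cu * x + su * y)) * (c^2 - c^2 * (su * y + cu * x)) - (c^2 * (su * x - cu * y)) * (c^2 * (su * x - cu * y))
   - c^4 * (1 - x^2 - y^2) = - (c^4 * (x^2 + y^2) * (su^2 + cu^2 - 1))"
  by (simp add: algebra_simps power2_eq_square power4_eq_xxxx)

lemma detF: assumes "a \<noteq> 0" "b \<noteq> 0" shows "det (matrix (F' a b c u v)) = c^4 * (1 - (v$1)^2 - (v$2)^2) / (a * b)"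
proof -
  have "det (matrix (F' a b c u v)) = ((c^2 + c^2 * (cos u * v$1 + sin u * v$2)) * (c^2 - c^2 * (sin u * v$2 + cos u * v$1))
     - (c^2 * (sin u * v$1 - cos u * v$2)) * (c^2 * (sin u * v$1 - cos u * v$2))) / (a * b)"
    unfolding det_2 matrix_def F'_def using assms by (simp add: field_simps)
  also have "\<dots> = c^4 * (1 - (v$1)^2 - (v$2)^2) / (a * b)"
    using detF_id[of c "cos u" "v$1" "sin u" "v$2"] by (simp only: sin_cos_squared_add diff_self mult_zero_right minus_zero right_minus_eq)
  finally show ?thesis .
qed


definition phi :: "real^2 \<Rightarrow> real^2" where "phi v = norm v *\<^sub>R v"
definition phi' :: "real^2 \<Rightarrow> real^2 \<Rightarrow> real^2" where "phi' v h = norm v *\<^sub>R h + (inner h (sgn v)) *\<^sub>R v"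

lemma dphi: "(phi has_derivative phi' v) (at v within S)"
proof (cases "v = 0")
  case False
  have "((\<lambda>x. norm x *\<^sub>R x) has_derivative (\<lambda>h. norm v *\<^sub>R h + (inner h (sgn v)) *\<^sub>R v)) (at v)"
    using has_derivative_norm[OF False] by (auto intro!: derivative_eq_intros)
  thus ?thesis unfolding phi_def phi'_def by (rule has_derivative_at_withinI)
next
  case True
  have "phi' 0 = (\<lambda>h. 0)" by (simp add: phi'_def fun_eq_iff)
  hence bl: "bounded_linear (phi' 0)" by simp
  have t: "((\<lambda>y::real^2. norm y) \<longlongrightarrow> 0) (at 0 within S)"
    by (intro tendsto_eq_intros) auto
  have ev: "eventually (\<lambda>y. norm y = norm (phi y - phi 0 - phi' 0 (y - 0)) / norm (y - 0)) (at 0 within S)"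
    unfolding eventually_at_filter by (rule always_eventually) (simp add: phi_def phi'_def)
  have "((\<lambda>y. norm (phi y - phi 0 - phi' 0 (y - 0)) / norm (y - 0)) \<longlongrightarrow> 0) (at 0 within S)"
    using tendsto_cong[OF ev] t by simp
  thus ?thesis using True bl by (simp add: has_derivative_iff_norm)
qed

lemma detphi: "det (matrix (phi' v)) = 2 * norm v ^ 2"
proof (cases "v = 0")
  case True thus ?thesis by (simp add: phi'_def det_2 matrix_def)
next
  case False
  hence r: "norm v \<noteq> 0" by simp
  have "det (matrix (phi' v)) = (norm v + (v$1)^2 / norm v) * (norm v + (v$2)^2 / norm v) - (v$2 * v$1 / norm v) * (v$1 * v$2 / norm v)"
    unfolding det_2 matrix_def phi'_def using r by (simp add: inner_axis' sgn_div_norm power2_eq_square field_simps)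
  also have "\<dots> = norm v ^ 2 + ((v$1)^2 + (v$2)^2)" using r by (simp add: field_simps power2_eq_square)
  also have "\<dots> = 2 * norm v ^ 2" by (simp add: norm2_vec)
  finally show ?thesis .
qed

lemma norm_phi: "norm (phi v) = norm v ^ 2"
  by (simp add: phi_def power2_eq_square)

lemma phi_inj: "inj phi"
proof (rule injI)
  fix v w assume e: "phi v = phi w"
  hence "norm v ^ 2 = norm w ^ 2" by (metis norm_phi)
  hence n: "norm v = norm w" by (simp add: power2_eq_iff_nonneg)
  show "v = w"
  proof (cases "norm v = 0")
    case True thus ?thesis using n by simp
  next
    case False thus ?thesis using e n by (simp add: phi_def)
  qed
qed

lemma phi_ball: "phi ` ball 0 1 = ball 0 1"
proof
  show "phi ` ball 0 1 \<subseteq> ball 0 1"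
    by (auto simp: norm_phi abs_square_less_1)
next
  show "ball 0 1 \<subseteq> phi ` ball 0 1"
  proof
    fix w :: "real^2" assume w: "w \<in> ball 0 1"
    show "w \<in> phi ` ball 0 1"
    proof (cases "w = 0")
      case True thus ?thesis by (auto simp: phi_def image_iff intro!: bexI[of _ 0])
    next
      case False
      define v where "v = (1 / sqrt (norm w)) *\<^sub>R w"
      have nv: "norm v = sqrt (norm w)" using False by (simp add: v_def field_simps)
      have "phi v = w" using False by (simp add: phi_def nv v_def)
      moreover have "norm v < 1" using w by (simp add: nv)
      ultimately show ?thesis by force
    qed
  qed
qed


lemma ball_meas: "measure lebesgue (ball (0::real^2) 1) = pi"
proof -
  have "measure lebesgue (ball (0::real^2) 1) = measure lborel (ball (0::real^2) 1)" by simp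
  also have "\<dots> = pi" using circle_area[of 1 0] by simp
  finally show ?thesis .
qed

lemma int_phi: "((\<lambda>v::real^2. 2 * norm v ^ 2) has_integral pi) (ball 0 1)"
proof -
  have "phi ` ball 0 1 \<in> lmeasurable \<and> measure lebesgue (phi ` ball 0 1) = pi"
    by (simp add: phi_ball ball_meas)
  hence "((\<lambda>x. \<bar>det (matrix (phi' x))\<bar>) has_integral pi) (ball 0 1)"
    using has_measure_differentiable_image[of "ball 0 1" phi phi' pi] dphi inj_on_subset[OF phi_inj]
    by auto
  thus ?thesis by (rule has_integral_eq[rotated]) (simp add: detphi)
qed

lemma int_one: "((\<lambda>v::real^2. 1) has_integral pi) (ball 0 1)"
proof -
  have "((indicator (ball (0::real^2) 1)) has_integral pi) UNIV"
    using lmeasurable_iff_has_integral[of "ball (0::real^2) 1"] by (simp add: ball_meas)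
  moreover have "(indicator (ball (0::real^2) 1) :: real^2 \<Rightarrow> real) = (\<lambda>x. if x \<in> ball (0::real^2) 1 then 1 else 0)"
    by (simp add: fun_eq_iff indicator_def)
  ultimately have "((\<lambda>x. if x \<in> ball (0::real^2) 1 then 1 else 0) has_integral pi) UNIV"
    by simp
  thus ?thesis by (rule iffD1[OF has_integral_restrict_UNIV])
qed

lemma F_inj: assumes "a > 0" "b > 0" "c > 0" shows "inj_on (F a b c u) (ball 0 1)"
proof (rule inj_onI)
  fix v w :: "real^2" assume v: "v \<in> ball 0 1" and w: "w \<in> ball 0 1" and e: "F a b c u v = F a b c u w"
  hence g: "Gc a b c u (E v) = Gc a b c u (E w)" by (metis EF)
  have m1: "E v \<in> cball 0 1" using v by (auto simp: norm_E)
  have m2: "E w \<in> cball 0 1" using w by (auto simp: norm_E)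
  have "E v = E w" using inj_onD[OF Gc_inj[OF assms, of u] g m1 m2] .
  thus "v = w" by (metis Ei_E)
qed

lemma meas_F: assumes "a > 0" "b > 0" "c > 0"
  shows "F a b c u ` ball 0 1 \<in> lmeasurable \<and> measure lebesgue (F a b c u ` ball 0 1) = pi * c^4 / (2 * a * b)"
proof -
  define k where "k = c^4 / (a * b)"
  have i0: "((\<lambda>v::real^2. k * 1 - (k/2) * (2 * norm v ^ 2)) has_integral (k * pi - (k/2) * pi)) (ball 0 1)"
    by (intro has_integral_diff has_integral_mult_right int_one int_phi)
  have eqv: "k * pi - (k/2) * pi = pi * c^4 / (2 * a * b)" by (simp add: k_def field_simps)
  have i: "((\<lambda>v::real^2. k * 1 - (k/2) * (2 * norm v ^ 2)) has_integral (pi * c^4 / (2 * a * b))) (ball 0 1)"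
    using i0 unfolding eqv .
  have "((\<lambda>v. \<bar>det (matrix (F' a b c u v))\<bar>) has_integral (pi * c^4 / (2 * a * b))) (ball 0 1)"
  proof (rule has_integral_eq[OF _ i])
    fix v :: "real^2" assume "v \<in> ball 0 1"
    hence n: "(v$1)^2 + (v$2)^2 < 1" using norm2_vec[of v] abs_square_less_1[of "norm v"] by simp
    have d: "det (matrix (F' a b c u v)) = k * (1 - (v$1)^2 - (v$2)^2)"
      using detF[of a b c u v] assms by (simp add: k_def)
    have k0: "k \<ge> 0" using assms by (simp add: k_def)
    have n1: "1 - (v$1)^2 - (v$2)^2 \<ge> 0" using n by linarith
    have "det (matrix (F' a b c u v)) \<ge> 0" unfolding d by (rule mult_nonneg_nonneg[OF k0 n1])
    hence "\<bar>det (matrix (F' a b c u v))\<bar> = k * (1 - (v$1)^2 - (v$2)^2)" using d by simp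
    thus "k * 1 - (k/2) * (2 * norm v ^ 2) = \<bar>det (matrix (F' a b c u v))\<bar>"
      by (simp add: norm2_vec algebra_simps)
  qed
  moreover have dd: "\<And>x. x \<in> ball 0 1 \<Longrightarrow> (F a b c u has_derivative F' a b c u x) (at x within ball 0 1)"
    using dF assms by simp
  moreover have "ball (0::real^2) 1 \<in> sets lebesgue" by simp
  ultimately show ?thesis
    using has_measure_differentiable_image[OF _ dd F_inj[OF assms]] by blast
qed

lemma pre_F: "E -` (Gc a b c u ` ball 0 1) = F a b c u ` ball 0 1"
proof
  show "F a b c u ` ball 0 1 \<subseteq> E -` (Gc a b c u ` ball 0 1)"
    by (auto simp: EF norm_E)
next
  show "E -` (Gc a b c u ` ball 0 1) \<subseteq> F a b c u ` ball 0 1"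
  proof
    fix v assume "v \<in> E -` (Gc a b c u ` ball 0 1)"
    then obtain z where z: "z \<in> ball 0 1" "E v = Gc a b c u z" by auto
    have "Ei z \<in> ball 0 1" using z(1) norm_E[of "Ei z"] by simp
    moreover have "F a b c u (Ei z) = v" by (metis EF E_Ei Ei_E z(2))
    ultimately show "v \<in> F a b c u ` ball 0 1" by blast
  qed
qed

theorem corollary3p1:
  fixes a b c u :: real
  assumes "a > b" "b > 0" "c > 0" "c^2 = a^2 - b^2"
  shows "simple_path (neg_pedal_path a b c u)
       \<and> pathfinish (neg_pedal_path a b c u) = pathstart (neg_pedal_path a b c u)
       \<and> inside (path_image (neg_pedal_path a b c u)) \<in> sets lebesgue
       \<and> measure lebesgue (inside (path_image (neg_pedal_path a b c u)))
           = pi * c^4 / (2 * a * b)"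
proof -
  have a: "a > 0" using assms by simp
  note T = main_top[OF a assms(2,3), of u]
  let ?I = "inside (path_image (neg_pedal_path a b c u))"
  have sp: "simple_path (neg_pedal_path a b c u)" using T by blast
  have cl: "pathfinish (neg_pedal_path a b c u) = pathstart (neg_pedal_path a b c u)" using T by blast
  have IU: "?I = Gc a b c u ` ball 0 1" using T by blast
  have op: "open ?I" using Jordan_inside_outside[OF sp cl] by blast
  hence bor: "?I \<in> sets borel" by simp
  hence leb: "?I \<in> sets lebesgue" by simp
  have "measure lebesgue ?I = measure lebesgue (E -` ?I)" by (rule meas_E[OF bor])
  also have "\<dots> = measure lebesgue (F a b c u ` ball 0 1)" unfolding IU pre_F ..
  also have "\<dots> = pi * c^4 / (2 * a * b)" using meas_F[OF a assms(2,3)] by blast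
  finally show ?thesis using sp cl leb by blast
qed

end
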